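(* Let $\mathfrak f=f_0x^2+f_1x+f_2\in\mathbb R[x,y]$ with $f_i\in\mathbb R[y]$ and $\deg(f_i)\le i$. Then there exists an algorithm which computes $\mathcal V_{\mathrm{aff}}(\mathfrak f)$.
   Context: For a set $\mathcal I$ of polynomials in $\mathbb R[x_1,\dots,x_d]$, $\mathcal V(\mathcal I)$ is its common real zero set, and $\mathcal V_{\mathrm{aff}}(\mathcal I)$ (the isolated affine subspaces) is the set of all affine subspaces $\mathcal C\subset\mathcal V(\mathcal I)$ which are not properly contained in a connected component of $\mathcal V(\mathcal I)$, i.e., the connected components of $\mathcal V(\mathcal I)$ that are affine subspaces. Algorithms operate exactly on real numbers with real root finding of univariate polynomials as a primitive. *)

theory Defs
  imports "HOL-Analysis.Analysis" "HOL-Computational_Algebra.Polynomial"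
begin

definition Vaff :: "'a::euclidean_space set \<Rightarrow> 'a set set" where
  "Vaff V = {C. affine C \<and> C \<noteq> {} \<and> C \<subseteq> V \<and> \<not> (\<exists>K \<in> components V. C \<subset> K)}"

definition quad_eval :: "real poly \<Rightarrow> real poly \<Rightarrow> real poly \<Rightarrow> real \<times> real \<Rightarrow> real" where
  "quad_eval f0 f1 f2 = (\<lambda>(x, y). poly f0 y * x ^ 2 + poly f1 y * x + poly f2 y)"

definition zero_set :: "real poly \<Rightarrow> real poly \<Rightarrow> real poly \<Rightarrow> (real \<times> real) set" where
  "zero_set f0 f1 f2 = {p. quad_eval f0 f1 f2 p = 0}"

section \<open>Model of computation: algebraic computation trees over the reals
  with exact arithmetic, exact comparisons and real root finding of
  univariate polynomials as a primitive\<close>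

text \<open>Registers form a list of reals; every instruction appends its result.
  An alg_output is a finite list of affine subspaces of R^2, each given by the
  registers holding a base point and the registers holding spanning
  direction vectors.\<close>

datatype prog =
    Const real prog
  | Add nat nat prog
  | Mul nat nat prog
  | Neg nat prog
  | Inv nat prog
  | IfPos nat prog prog
  | IfZero nat prog prog
  | Roots "nat list" prog              \<comment> \<open>for p = sum r_(is!k) X^k (abort if p = 0): append the
                                           number of distinct real roots of p, then those roots in
                                           increasing order\<close>
  | Ret "((nat \<times> nat) \<times> (nat \<times> nat) list) list"

definition reg :: "real list \<Rightarrow> nat \<Rightarrow> real" where
  "reg s i = (if i < length s then s ! i else 0)"

definition real_roots_sorted :: "real poly \<Rightarrow> real list" where
  "real_roots_sorted p = sorted_list_of_set {x. poly p x = 0}"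

type_synonym alg_output = "((real \<times> real) \<times> (real \<times> real) list) list"

primrec exec :: "prog \<Rightarrow> real list \<Rightarrow> alg_output option" where
  "exec (Const c P) s = exec P (s @ [c])"
| "exec (Add i j P) s = exec P (s @ [reg s i + reg s j])"
| "exec (Mul i j P) s = exec P (s @ [reg s i * reg s j])"
| "exec (Neg i P) s = exec P (s @ [- reg s i])"
| "exec (Inv i P) s = (if reg s i = 0 then None else exec P (s @ [1 / reg s i]))"
| "exec (IfPos i P Q) s = (if reg s i > 0 then exec P s else exec Q s)"
| "exec (IfZero i P Q) s = (if reg s i = 0 then exec P s else exec Q s)"
| "exec (Roots is P) s =
     (let p = Poly (map (reg s) is) in
      if p = 0 then None
      else exec P (s @ [real (length (real_roots_sorted p))] @ real_roots_sorted p))"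
| "exec (Ret out) s =
     Some (map (\<lambda>((a, b), ds). ((reg s a, reg s b), map (\<lambda>(c, d). (reg s c, reg s d)) ds)) out)"

definition out_set :: "alg_output \<Rightarrow> (real \<times> real) set set" where
  "out_set out = (\<lambda>(p, ds). (\<lambda>v. p + v) ` span (set ds)) ` set out"

definition input_regs :: "real poly \<Rightarrow> real poly \<Rightarrow> real poly \<Rightarrow> real list" where
  "input_regs f0 f1 f2 =
     [coeff f0 0, coeff f1 0, coeff f1 1, coeff f2 0, coeff f2 1, coeff f2 2]"

end

theory Submission
  imports Defs
begin


lemma Vaff_alt: "Vaff V = {C. affine C \<and> C \<noteq> {} \<and> C \<subseteq> V \<and>
   (\<forall>S. connected S \<and> C \<subseteq> S \<and> S \<subseteq> V \<longrightarrow> S = C)}"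
proof (intro set_eqI iffI)
  fix C assume "C \<in> Vaff V"
  then have C: "affine C" "C \<noteq> {}" "C \<subseteq> V" "\<not> (\<exists>K \<in> components V. C \<subset> K)"
    by (auto simp: Vaff_def)
  have "S = C" if S: "connected S" "C \<subseteq> S" "S \<subseteq> V" for S
  proof -
    obtain p where p: "p \<in> C" using C by auto
    have K: "connected_component_set V p \<in> components V" using p C by (auto intro: componentsI)
    have "S \<subseteq> connected_component_set V p"
      using S p by (intro connected_component_maximal) auto
    with S have "C \<subseteq> connected_component_set V p" by blast
    with C(4) K have "C = connected_component_set V p" by (meson psubsetI)
    with S \<open>S \<subseteq> connected_component_set V p\<close> show ?thesis by blast
  qed
  with C show "C \<in> {C. affine C \<and> C \<noteq> {} \<and> C \<subseteq> V \<and>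
   (\<forall>S. connected S \<and> C \<subseteq> S \<and> S \<subseteq> V \<longrightarrow> S = C)}" by auto
next
  fix C assume "C \<in> {C. affine C \<and> C \<noteq> {} \<and> C \<subseteq> V \<and>
   (\<forall>S. connected S \<and> C \<subseteq> S \<and> S \<subseteq> V \<longrightarrow> S = C)}"
  then have C: "affine C" "C \<noteq> {}" "C \<subseteq> V"
    "\<And>S. connected S \<Longrightarrow> C \<subseteq> S \<Longrightarrow> S \<subseteq> V \<Longrightarrow> S = C" by auto
  have "\<not> C \<subset> K" if "K \<in> components V" for K
    using C(4)[of K] in_components_connected[OF that] in_components_subset[OF that] by auto
  then have "\<not> (\<exists>K\<in>components V. C \<subset> K)" by blast
  with C(1,2,3) show "C \<in> Vaff V" unfolding Vaff_def by simp
qed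

lemma affine_connected: "affine (C::'a::real_normed_vector set) \<Longrightarrow> connected C"
  by (simp add: affine_imp_convex convex_connected)

lemma Vaff_affine: "affine V \<Longrightarrow> V \<noteq> {} \<Longrightarrow> Vaff V = {V}"
  unfolding Vaff_alt using affine_connected by blast

lemma Vaff_empty: "Vaff {} = {}"
  unfolding Vaff_def by auto

lemma Vaff_preimage_empty:
  fixes g h :: "real \<times> real \<Rightarrow> real \<times> real"
  assumes gaff: "\<And>C. affine C \<Longrightarrow> affine (g ` C)"
    and hc: "continuous_on UNIV h" and gh: "\<And>x. g (h x) = x" and hg: "\<And>x. h (g x) = x"
    and W: "Vaff W = {}"
  shows "Vaff (g -` W) = {}"
proof (rule ccontr)
  assume "Vaff (g -` W) \<noteq> {}"
  then obtain C where "C \<in> Vaff (g -` W)" by blast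
  then have C: "affine C" "C \<noteq> {}" "C \<subseteq> g -` W"
     "\<And>S. connected S \<Longrightarrow> C \<subseteq> S \<Longrightarrow> S \<subseteq> g -` W \<Longrightarrow> S = C"
    unfolding Vaff_alt by simp_all
  have "g ` C \<in> Vaff W"
    unfolding Vaff_alt
  proof (intro CollectI conjI allI impI)
    show "affine (g ` C)" using gaff C by auto
    show "g ` C \<noteq> {}" using C by auto
    show "g ` C \<subseteq> W" using C by auto
    fix S assume S: "connected S \<and> g ` C \<subseteq> S \<and> S \<subseteq> W"
    have "connected (h ` S)" using S hc by (meson connected_continuous_image continuous_on_subset subset_UNIV)
    moreover have "C \<subseteq> h ` S" using S hg by (metis image_subset_iff imageI subsetI)
    moreover have "h ` S \<subseteq> g -` W" using S gh by auto
    ultimately have "h ` S = C" using C(4) by blast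
    moreover have "g ` h ` S = S" by (simp add: image_image gh)
    ultimately show "S = g ` C" by simp
  qed
  with W show False by auto
qed

lemma affine_map_image:
  fixes g :: "real \<times> real \<Rightarrow> real \<times> real"
  assumes "\<And>p q u v. u + v = 1 \<Longrightarrow> g (u *\<^sub>R p + v *\<^sub>R q) = u *\<^sub>R g p + v *\<^sub>R g q"
    and "affine C"
  shows "affine (g ` C)"
  unfolding affine_def
proof (intro ballI allI impI)
  fix x y u v assume "x \<in> g ` C" "y \<in> g ` C" "(u::real) + v = 1"
  then obtain p q where "p \<in> C" "q \<in> C" "x = g p" "y = g q" by auto
  have "u *\<^sub>R x + v *\<^sub>R y = g (u *\<^sub>R p + v *\<^sub>R q)"
    using assms(1) \<open>u + v = 1\<close> \<open>x = g p\<close> \<open>y = g q\<close> by simp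
  moreover have "u *\<^sub>R p + v *\<^sub>R q \<in> C"
    using assms(2) \<open>p \<in> C\<close> \<open>q \<in> C\<close> \<open>u + v = 1\<close> unfolding affine_def by blast
  ultimately show "u *\<^sub>R x + v *\<^sub>R y \<in> g ` C" by simp
qed



lemma two_split:
  fixes \<phi> :: "real \<times> real \<Rightarrow> real"
  assumes cont: "continuous_on UNIV \<phi>" and r: "r > 0"
    and S: "connected S" "S \<subseteq> {p. \<phi> p = r} \<union> {p. \<phi> p = -r}"
  shows "S \<subseteq> {p. \<phi> p = r} \<or> S \<subseteq> {p. \<phi> p = -r}"
proof (rule ccontr)
  assume "\<not> ?thesis"
  then obtain x y where xy: "x \<in> S" "y \<in> S" "\<phi> x \<noteq> r" "\<phi> y \<noteq> -r" by blast
  with S have "\<phi> x = -r" "\<phi> y = r" by auto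
  have "connected (\<phi> ` S)"
    using S cont by (meson connected_continuous_image continuous_on_subset subset_UNIV)
  then have "0 \<in> \<phi> ` S"
    unfolding connected_iff_interval using xy \<open>\<phi> x = -r\<close> \<open>\<phi> y = r\<close> r
    by (metis imageI less_eq_real_def neg_less_0_iff_less)
  then obtain z where "z \<in> S" "\<phi> z = 0" by auto
  with S r show False by auto
qed

lemma Vaff_two:
  fixes \<phi> :: "real \<times> real \<Rightarrow> real"
  assumes cont: "continuous_on UNIV \<phi>" and r: "r > 0"
    and aA: "affine {p. \<phi> p = r}" and aB: "affine {p. \<phi> p = -r}"
    and nA: "{p. \<phi> p = r} \<noteq> {}" and nB: "{p. \<phi> p = -r} \<noteq> {}"
  shows "Vaff ({p. \<phi> p = r} \<union> {p. \<phi> p = -r}) = {{p. \<phi> p = r}, {p. \<phi> p = -r}}"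
proof -
  let ?A = "{p. \<phi> p = r}" and ?B = "{p. \<phi> p = -r}"
  have AB: "?A \<inter> ?B = {}" using r by auto
  have sp: "S \<subseteq> ?A \<or> S \<subseteq> ?B" if "connected S" "S \<subseteq> ?A \<union> ?B" for S
    using two_split[OF cont r that] .
  have cA: "connected ?A" and cB: "connected ?B" using aA aB affine_connected by auto
  show ?thesis
  proof (intro set_eqI iffI)
    fix C assume "C \<in> Vaff (?A \<union> ?B)"
    then have C: "affine C" "C \<noteq> {}" "C \<subseteq> ?A \<union> ?B"
      "\<And>S. connected S \<Longrightarrow> C \<subseteq> S \<Longrightarrow> S \<subseteq> ?A \<union> ?B \<Longrightarrow> S = C"
      unfolding Vaff_alt by simp_all
    from sp[OF affine_connected[OF C(1)] C(3)] have "C \<subseteq> ?A \<or> C \<subseteq> ?B" .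
    then show "C \<in> {?A, ?B}"
    proof
      assume "C \<subseteq> ?A" then have "?A = C" using C(4)[OF cA] by blast
      then show ?thesis by simp
    next
      assume "C \<subseteq> ?B" then have "?B = C" using C(4)[OF cB] by blast
      then show ?thesis by simp
    qed
  next
    fix C assume "C \<in> {?A, ?B}"
    then show "C \<in> Vaff (?A \<union> ?B)"
    proof
      assume C: "C = ?A"
      show ?thesis unfolding Vaff_alt C
      proof (intro CollectI conjI allI impI)
        fix S assume S: "connected S \<and> ?A \<subseteq> S \<and> S \<subseteq> ?A \<union> ?B"
        then have "S \<subseteq> ?A \<or> S \<subseteq> ?B" using sp by blast
        with S nA AB show "S = ?A" by blast
      qed (use aA nA in auto)
    next
      assume "C \<in> {?B}" then have C: "C = ?B" by simp
      show ?thesis unfolding Vaff_alt C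
      proof (intro CollectI conjI allI impI)
        fix S assume S: "connected S \<and> ?B \<subseteq> S \<and> S \<subseteq> ?A \<union> ?B"
        then have "S \<subseteq> ?A \<or> S \<subseteq> ?B" using sp by blast
        with S nB AB show "S = ?B" by blast
      qed (use aB nB in auto)
    qed
  qed
qed

definition flat :: "real \<times> real \<Rightarrow> (real \<times> real) list \<Rightarrow> (real \<times> real) set" where
  "flat p ds = (\<lambda>v. p + v) ` span (set ds)"

lemma out_set_Cons: "out_set ((p, ds) # xs) = insert (flat p ds) (out_set xs)"
  by (simp add: out_set_def flat_def)

lemma out_set_Nil: "out_set [] = {}"
  by (simp add: out_set_def)

lemma flat_affine: "affine (flat p ds)"
  unfolding flat_def using affine_translation[of "span (set ds)" p] subspace_imp_affine[OF subspace_span] by auto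

lemma flat_ne: "flat p ds \<noteq> {}"
  unfolding flat_def using span_zero by blast

lemma line_x:
  assumes "\<alpha> \<noteq> 0"
  shows "{p. \<alpha> * fst p + \<beta> * snd p + \<gamma> = 0} = flat (-\<gamma>/\<alpha>, 0) [(-\<beta>/\<alpha>, 1)]"
proof -
  have "(x, y) \<in> flat (-\<gamma>/\<alpha>, 0) [(-\<beta>/\<alpha>, 1)] \<longleftrightarrow> \<alpha> * x + \<beta> * y + \<gamma> = 0" for x y
  proof -
    have "(x, y) \<in> flat (-\<gamma>/\<alpha>, 0) [(-\<beta>/\<alpha>, 1)] \<longleftrightarrow> (\<exists>k. x = -\<gamma>/\<alpha> + k * (-\<beta>/\<alpha>) \<and> y = k)"
      by (auto simp: flat_def span_singleton image_iff)
    also have "\<dots> \<longleftrightarrow> \<alpha> * x + \<beta> * y + \<gamma> = 0"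
      using assms by (auto simp: field_simps)
    finally show ?thesis .
  qed
  then show ?thesis by auto
qed

lemma line_y:
  assumes "\<beta> \<noteq> 0"
  shows "{p. \<alpha> * fst p + \<beta> * snd p + \<gamma> = 0} = flat (0, -\<gamma>/\<beta>) [(1, -\<alpha>/\<beta>)]"
proof -
  have "(x, y) \<in> flat (0, -\<gamma>/\<beta>) [(1, -\<alpha>/\<beta>)] \<longleftrightarrow> \<alpha> * x + \<beta> * y + \<gamma> = 0" for x y
  proof -
    have "(x, y) \<in> flat (0, -\<gamma>/\<beta>) [(1, -\<alpha>/\<beta>)] \<longleftrightarrow> (\<exists>k. y = -\<gamma>/\<beta> + k * (-\<alpha>/\<beta>) \<and> x = k)"
      by (auto simp: flat_def span_singleton image_iff)
    also have "\<dots> \<longleftrightarrow> \<alpha> * x + \<beta> * y + \<gamma> = 0"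
      using assms by (auto simp: field_simps)
    finally show ?thesis .
  qed
  then show ?thesis by auto
qed

lemma flat_point: "flat p [] = {p}"
  by (simp add: flat_def)

lemma flat_univ: "flat (0,0) [(1,0),(0,1)] = UNIV"
proof -
  have "(x, y) \<in> span {(1::real,0::real),(0,1)}" for x y
  proof -
    have "(x, y) = x *\<^sub>R (1,0) + y *\<^sub>R (0,1)" by simp
    moreover have "x *\<^sub>R (1::real,0::real) + y *\<^sub>R (0,1) \<in> span {(1::real,0::real),(0,1)}"
      by (intro span_add span_mul span_base) auto
    ultimately show ?thesis by simp
  qed
  moreover have "(\<lambda>v. (0::real,0::real) + v) = (\<lambda>v. v)" by (simp add: zero_prod_def[symmetric])
  ultimately show ?thesis by (auto simp: flat_def)
qed



lemma pos_near:
  fixes g :: "real \<Rightarrow> real"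
  assumes "isCont g y0" "g y0 > 0"
  shows "\<exists>e>0. \<forall>y. \<bar>y - y0\<bar> < e \<longrightarrow> g y > 0"
proof -
  have "\<forall>\<^sub>F y in at y0. g y > 0"
    using assms unfolding isCont_def by (rule order_tendstoD(1))
  then obtain d where d: "d > 0" "\<And>y. y \<noteq> y0 \<Longrightarrow> dist y y0 < d \<Longrightarrow> g y > 0"
    unfolding eventually_at by blast
  have "\<bar>y - y0\<bar> < d \<longrightarrow> g y > 0" for y
    using d assms(2) by (cases "y = y0") (auto simp: dist_real_def)
  then show ?thesis using d(1) by blast
qed

lemma D_interval:
  fixes d2 d1 d0 y0 :: real
  defines "D \<equiv> \<lambda>y. d2 * y^2 + d1 * y + d0"
  assumes nn: "D y0 \<ge> 0" and n2: "\<not> (d2 < 0 \<and> d1^2 = 4*d2*d0)"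
  shows "\<exists>e>0. (\<forall>y. y0 \<le> y \<and> y \<le> y0 + e \<longrightarrow> D y \<ge> 0) \<or> (\<forall>y. y0 - e \<le> y \<and> y \<le> y0 \<longrightarrow> D y \<ge> 0)"
proof (cases "D y0 > 0")
  case True
  have "isCont D y0" unfolding D_def by (intro continuous_intros)
  from pos_near[OF this True] obtain e where e: "e > 0" "\<And>y. \<bar>y - y0\<bar> < e \<Longrightarrow> D y > 0" by blast
  show ?thesis
    by (rule exI[of _ "e/2"]) (use e in \<open>auto intro!: less_imp_le\<close>)
next
  case False
  with nn have z: "D y0 = 0" by simp
  define m where "m = 2*d2*y0 + d1"
  have fac: "D y = (y - y0) * (d2 * (y - y0) + m)" for y
  proof -
    have "D y = D y - D y0" using z by simp
    also have "\<dots> = (y - y0) * (d2 * (y - y0) + m)"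
      unfolding D_def m_def by (simp add: power2_eq_square algebra_simps)
    finally show ?thesis .
  qed
  consider "m > 0" | "m < 0" | "m = 0" by linarith
  then show ?thesis
  proof cases
    case 1
    have "isCont (\<lambda>y. d2 * (y - y0) + m) y0" by (intro continuous_intros)
    from pos_near[OF this] 1 obtain e where e: "e > 0" "\<And>y. \<bar>y - y0\<bar> < e \<Longrightarrow> d2 * (y - y0) + m > 0" by auto
    show ?thesis
    proof (rule exI[of _ "e/2"], intro conjI disjI1 allI impI)
      fix y assume "y0 \<le> y \<and> y \<le> y0 + e/2"
      then have "y - y0 \<ge> 0" "d2 * (y - y0) + m > 0" using e by auto
      then show "D y \<ge> 0" unfolding fac by simp
    qed (use e in auto)
  next
    case 2
    have "isCont (\<lambda>y. - (d2 * (y - y0) + m)) y0" by (intro continuous_intros)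
    from pos_near[OF this] 2 obtain e where e: "e > 0" "\<And>y. \<bar>y - y0\<bar> < e \<Longrightarrow> - (d2 * (y - y0) + m) > 0" by auto
    show ?thesis
    proof (rule exI[of _ "e/2"], intro conjI disjI2 allI impI)
      fix y assume "y0 - e/2 \<le> y \<and> y \<le> y0"
      then have "y - y0 \<le> 0" "d2 * (y - y0) + m < 0" using e(2)[of y] e(1) by auto
      then show "D y \<ge> 0" unfolding fac by (simp add: mult_nonpos_nonpos)
    qed (use e in auto)
  next
    case 3
    then have Dy: "D y = d2 * (y - y0)^2" for y unfolding fac by (simp add: power2_eq_square)
    show ?thesis
    proof (cases "d2 < 0")
      case True
      have "d1 = -2*d2*y0" using 3 unfolding m_def by simp
      moreover have "d0 = d2 * y0^2" using z \<open>d1 = -2*d2*y0\<close> unfolding D_def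
        by (simp add: power2_eq_square algebra_simps)
      ultimately have "d1^2 = 4*d2*d0" by (simp add: power2_eq_square algebra_simps)
      with True n2 show ?thesis by simp
    next
      case False
      then show ?thesis by (intro exI[of _ 1]) (simp add: Dy)
    qed
  qed
qed



definition W :: "real \<Rightarrow> real \<Rightarrow> real \<Rightarrow> (real \<times> real) set" where
  "W d2 d1 d0 = {p. (fst p)^2 = d2 * (snd p)^2 + d1 * snd p + d0}"

lemma W_empty:
  fixes d2 d1 d0 :: real
  assumes n1: "\<not> (d2 = 0 \<and> d1 = 0 \<and> d0 \<ge> 0)" and n2: "\<not> (d2 < 0 \<and> d1^2 = 4*d2*d0)"
  shows "Vaff (W d2 d1 d0) = {}"
proof (rule ccontr)
  define D where "D = (\<lambda>y::real. d2 * y^2 + d1 * y + d0)"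
  have memW: "(u, y) \<in> W d2 d1 d0 \<longleftrightarrow> u^2 = D y" for u y by (simp add: W_def D_def)
  assume "Vaff (W d2 d1 d0) \<noteq> {}"
  then obtain C where "C \<in> Vaff (W d2 d1 d0)" by blast
  then have C: "affine C" "C \<noteq> {}" "C \<subseteq> W d2 d1 d0"
     "\<And>S. connected S \<Longrightarrow> C \<subseteq> S \<Longrightarrow> S \<subseteq> W d2 d1 d0 \<Longrightarrow> S = C"
    unfolding Vaff_alt by simp_all
  obtain p where p: "p \<in> C" using C(2) by blast
  show False
  proof (cases "\<exists>q\<in>C. q \<noteq> p")
    case True
    then obtain q where q: "q \<in> C" "q \<noteq> p" by blast
    obtain u1 y1 where p1: "p = (u1, y1)" by (cases p)
    obtain u2 y2 where q2: "q = (u2, y2)" by (cases q)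
    have lineC: "(u1 + t*(u2-u1), y1 + t*(y2-y1)) \<in> C" for t
    proof -
      have "(1-t) *\<^sub>R p + t *\<^sub>R q \<in> C" using C(1) p q(1) unfolding affine_def by simp
      moreover have "(1-t) *\<^sub>R p + t *\<^sub>R q = (u1 + t*(u2-u1), y1 + t*(y2-y1))"
        by (simp add: p1 q2 algebra_simps)
      ultimately show ?thesis by simp
    qed
    have key: "(u1 + t*(u2-u1))^2 = D (y1 + t*(y2-y1))" for t
      using lineC[of t] C(3) memW by blast
    show False
    proof (cases "y2 = y1")
      case True
      then have "u2 \<noteq> u1" using q(2) p1 q2 by auto
      have k1: "(u1 + (u2-u1))^2 = D y1" using key[of 1] True by simp
      have k2: "(u1 - (u2-u1))^2 = D y1" using key[of "-1"] True by simp
      have k0: "u1^2 = D y1" using key[of 0] by simp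
      have "(u1 + (u2-u1))^2 + (u1 - (u2-u1))^2 = 2*u1^2 + 2*(u2-u1)^2"
        by (simp add: power2_eq_square algebra_simps)
      with k0 k1 k2 have "(u2-u1)^2 = 0" by simp
      with \<open>u2 \<noteq> u1\<close> show False by simp
    next
      case False
      define \<alpha> where "\<alpha> = (u2-u1)/(y2-y1)"
      define \<beta> where "\<beta> = u1 - \<alpha>*y1"
      have onC: "(\<alpha>*y+\<beta>, y) \<in> C" for y
      proof -
        have "u1 + ((y-y1)/(y2-y1))*(u2-u1) = u1 + \<alpha>*(y-y1)" unfolding \<alpha>_def by simp
        also have "\<dots> = \<alpha>*y+\<beta>" unfolding \<beta>_def by (simp add: algebra_simps)
        finally have "u1 + ((y-y1)/(y2-y1))*(u2-u1) = \<alpha>*y+\<beta>" .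
        moreover have "y1 + ((y-y1)/(y2-y1))*(y2-y1) = y" using False by simp
        ultimately show ?thesis using lineC[of "(y-y1)/(y2-y1)"] by simp
      qed
      have iden: "(\<alpha>*y+\<beta>)^2 = D y" for y using onC[of y] C(3) memW by blast
      have e0: "\<beta>^2 = d0" using iden[of 0] by (simp add: D_def)
      have e1: "(\<alpha>+\<beta>)^2 = d2 + d1 + d0" using iden[of 1] by (simp add: D_def)
      have e2: "(\<beta>-\<alpha>)^2 = d2 - d1 + d0" using iden[of "-1"] by (simp add: D_def algebra_simps)
      have d2e: "d2 = \<alpha>^2"
        using e0 e1 e2 by (simp add: power2_eq_square algebra_simps)
      have d1e: "d1 = 2*\<alpha>*\<beta>"
        using e0 e1 e2 d2e by (simp add: power2_eq_square algebra_simps)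
      show False
      proof (cases "\<alpha> = 0")
        case True
        then show False using n1 d2e d1e e0 by auto
      next
        case False
        let ?L = "range (\<lambda>y. (-(\<alpha>*y+\<beta>), y))"
        have cL: "connected ?L"
          by (intro connected_continuous_image continuous_intros connected_UNIV)
        have LW: "?L \<subseteq> W d2 d1 d0"
        proof (clarify)
          fix y have "(-(\<alpha>*y+\<beta>))^2 = D y" using iden[of y] by (metis power2_minus)
          then show "(-(\<alpha>*y+\<beta>), y) \<in> W d2 d1 d0" using memW by blast
        qed
        have "(0, -\<beta>/\<alpha>) \<in> C" using onC[of "-\<beta>/\<alpha>"] False by simp
        moreover have "(0, -\<beta>/\<alpha>) \<in> ?L"
          using False by (auto simp: image_iff intro!: exI[of _ "-\<beta>/\<alpha>"])
        ultimately have "C \<inter> ?L \<noteq> {}" by blast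
        then have "connected (C \<union> ?L)" using connected_Un affine_connected[OF C(1)] cL by blast
        then have "C \<union> ?L = C" using C(3,4) LW by blast
        then have LC: "?L \<subseteq> C" by blast
        define y' where "y' = (1-\<beta>)/\<alpha>"
        have a1: "\<alpha>*y'+\<beta> = 1" using False unfolding y'_def by simp
        have P1: "(1, y') \<in> C" using onC[of y'] a1 by simp
        have P2: "(-1, y') \<in> C" using LC a1 by (metis (no_types, lifting) rangeI subsetD)
        have "(1/2) *\<^sub>R (1, y') + (1/2) *\<^sub>R (-1, y') \<in> C"
          using C(1) P1 P2 unfolding affine_def by (metis field_sum_of_halves)
        then have "(0, y') \<in> C" by simp
        then have "0^2 = D y'" using C(3) memW by blast
        moreover have "D y' = 1" using iden[of y'] a1 by simp
        ultimately show False by simp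
      qed
    qed
  next
    case False
    then have Cp: "C = {p}" using p by blast
    obtain u0 y0 where p0: "p = (u0, y0)" by (cases p)
    have u0: "u0^2 = D y0" using p C(3) memW p0 by blast
    then have "D y0 \<ge> 0" by (metis zero_le_power2)
    from D_interval[OF this[unfolded D_def] n2]
    obtain e where e: "e > 0" "(\<forall>y. y0 \<le> y \<and> y \<le> y0 + e \<longrightarrow> D y \<ge> 0) \<or> (\<forall>y. y0 - e \<le> y \<and> y \<le> y0 \<longrightarrow> D y \<ge> 0)"
      unfolding D_def by blast
    define \<sigma> where "\<sigma> = (if u0 \<ge> 0 then 1 else (-1::real))"
    have gen: False if ab: "a \<le> y0" "y0 \<le> b" "a < b" "\<forall>y. a \<le> y \<and> y \<le> b \<longrightarrow> D y \<ge> 0" for a b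
    proof -
      let ?S = "(\<lambda>y. (\<sigma> * sqrt (D y), y)) ` {a..b}"
      have "connected ?S"
        unfolding D_def by (intro connected_continuous_image continuous_intros connected_Icc)
      moreover have "?S \<subseteq> W d2 d1 d0"
      proof
        fix z assume "z \<in> ?S"
        then obtain y where y: "a \<le> y" "y \<le> b" "z = (\<sigma> * sqrt (D y), y)" by auto
        have "(\<sigma> * sqrt (D y))^2 = D y"
          using ab(4) y unfolding \<sigma>_def by (simp add: power_mult_distrib)
        then show "z \<in> W d2 d1 d0" using memW y(3) by simp
      qed
      moreover have "C \<subseteq> ?S"
      proof -
        have "\<sigma> * sqrt (D y0) = u0" using u0[symmetric] unfolding \<sigma>_def by (simp add: real_sqrt_abs)
        then have "p \<in> ?S" using ab p0 by (auto simp: image_iff intro!: bexI[of _ y0])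
        then show ?thesis using Cp by simp
      qed
      ultimately have "?S = C" using C(4) by blast
      moreover have "(\<sigma> * sqrt (D a), a) \<in> ?S" "(\<sigma> * sqrt (D b), b) \<in> ?S" using ab by auto
      ultimately show False using Cp p0 ab(3) by auto
    qed
    from e(2) show False
    proof
      assume "\<forall>y. y0 \<le> y \<and> y \<le> y0 + e \<longrightarrow> D y \<ge> 0"
      then show False using gen[of y0 "y0+e"] e(1) by auto
    next
      assume "\<forall>y. y0 - e \<le> y \<and> y \<le> y0 \<longrightarrow> D y \<ge> 0"
      then show False using gen[of "y0-e" y0] e(1) by auto
    qed
  qed
qed



lemma Vaff_lin_preimage:
  fixes A1 B1 C1 A2 B2 C2 :: real
  assumes W: "Vaff S = {}" and det: "A1*B2 - A2*B1 \<noteq> 0"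
  shows "Vaff ((\<lambda>p. (A1*fst p + B1 * snd p + C1, A2*fst p + B2 * snd p + C2)) -` S) = {}"
proof (rule Vaff_preimage_empty[OF _ _ _ _ W])
  let ?g = "(\<lambda>p::real\<times>real. (A1*fst p + B1 * snd p + C1, A2*fst p + B2 * snd p + C2))"
  let ?d = "A1*B2 - A2*B1"
  let ?h = "(\<lambda>p::real\<times>real. ((B2*(fst p - C1) - B1*(snd p - C2))/?d, (A1*(snd p - C2) - A2*(fst p - C1))/?d))"
  fix C :: "(real\<times>real) set" assume "affine C"
  show "affine (?g ` C)"
  proof (rule affine_map_image[OF _ \<open>affine C\<close>])
    fix p q :: "real \<times> real" and u v :: real assume uv: "u + v = 1"
    then have v: "v = 1 - u" by simp
    show "?g (u *\<^sub>R p + v *\<^sub>R q) = u *\<^sub>R ?g p + v *\<^sub>R ?g q"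
      by (cases p, cases q) (simp add: v algebra_simps)
  qed
next
  let ?d = "A1*B2 - A2*B1"
  show "continuous_on UNIV (\<lambda>p::real\<times>real. ((B2*(fst p - C1) - B1*(snd p - C2))/?d, (A1*(snd p - C2) - A2*(fst p - C1))/?d))"
    using det by (intro continuous_intros) auto
next
  fix x :: "real \<times> real"
  show "(\<lambda>p. (A1*fst p + B1 * snd p + C1, A2*fst p + B2 * snd p + C2))
     ((\<lambda>p. ((B2*(fst p - C1) - B1*(snd p - C2))/(A1*B2 - A2*B1), (A1*(snd p - C2) - A2*(fst p - C1))/(A1*B2 - A2*B1))) x) = x"
  proof -
    obtain a b where x: "x = (a, b)" by (cases x)
    let ?d = "A1*B2 - A2*B1"
    let ?X = "B2*(a - C1) - B1*(b - C2)" and ?Y = "A1*(b - C2) - A2*(a - C1)"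
    have 1: "A1*(?X/?d) + B1*(?Y/?d) = (A1*?X + B1*?Y)/?d" by (simp add: add_divide_distrib)
    have 2: "A2*(?X/?d) + B2*(?Y/?d) = (A2*?X + B2*?Y)/?d" by (simp add: add_divide_distrib)
    have 3: "A1*?X + B1*?Y = ?d*(a - C1)" by (simp add: algebra_simps)
    have 4: "A2*?X + B2*?Y = ?d*(b - C2)" by (simp add: algebra_simps)
    show ?thesis using det unfolding x by (simp only: prod.sel 1 2 3 4) simp
  qed
next
  fix x :: "real \<times> real"
  show "(\<lambda>p. ((B2*(fst p - C1) - B1*(snd p - C2))/(A1*B2 - A2*B1), (A1*(snd p - C2) - A2*(fst p - C1))/(A1*B2 - A2*B1)))
     ((\<lambda>p. (A1*fst p + B1 * snd p + C1, A2*fst p + B2 * snd p + C2)) x) = x"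
  proof -
    obtain a b where x: "x = (a, b)" by (cases x)
    let ?d = "A1*B2 - A2*B1"
    have 3: "B2*(A1*a + B1*b + C1 - C1) - B1*(A2*a + B2*b + C2 - C2) = ?d*a" by (simp add: algebra_simps)
    have 4: "A1*(A2*a + B2*b + C2 - C2) - A2*(A1*a + B1*b + C1 - C1) = ?d*b" by (simp add: algebra_simps)
    show ?thesis using det unfolding x by (simp only: prod.sel 3 4) simp
  qed
qed



definition Z :: "real \<Rightarrow> real \<Rightarrow> real \<Rightarrow> real \<Rightarrow> real \<Rightarrow> real \<Rightarrow> (real \<times> real) set" where
  "Z a b0 b1 c0 c1 c2 = {p. a * (fst p)^2 + (b0 + b1 * snd p) * fst p + (c0 + c1 * snd p + c2 * (snd p)^2) = 0}"

lemma Vaff_two_lines: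
  fixes \<alpha> \<beta> \<gamma> r :: real
  assumes "\<alpha> \<noteq> 0" "r > 0"
  shows "Vaff ({p. \<alpha> * fst p + \<beta> * snd p + \<gamma> = r} \<union> {p. \<alpha> * fst p + \<beta> * snd p + \<gamma> = -r})
     = out_set [(((r - \<gamma>)/\<alpha>, 0), [(-\<beta>/\<alpha>, 1)]), (((- \<gamma> - r)/\<alpha>, 0), [(-\<beta>/\<alpha>, 1)])]"
proof -
  have e1: "{p. \<alpha> * fst p + \<beta> * snd p + \<gamma> = r} = flat ((r - \<gamma>)/\<alpha>, 0) [(-\<beta>/\<alpha>, 1)]"
    using line_x[OF assms(1), of \<beta> "\<gamma> - r"] by (simp add: algebra_simps)
  have e2: "{p. \<alpha> * fst p + \<beta> * snd p + \<gamma> = -r} = flat ((- \<gamma> - r)/\<alpha>, 0) [(-\<beta>/\<alpha>, 1)]"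
  proof -
    have "{p. \<alpha> * fst p + \<beta> * snd p + \<gamma> = -r} = {p. \<alpha> * fst p + \<beta> * snd p + (\<gamma> + r) = 0}"
      by (rule Collect_cong) linarith
    also have "\<dots> = flat ((- \<gamma> - r)/\<alpha>, 0) [(-\<beta>/\<alpha>, 1)]"
      using line_x[OF assms(1), of \<beta> "\<gamma> + r"] by (simp add: algebra_simps)
    finally show ?thesis .
  qed
  have "Vaff ({p. \<alpha> * fst p + \<beta> * snd p + \<gamma> = r} \<union> {p. \<alpha> * fst p + \<beta> * snd p + \<gamma> = -r})
     = {{p. \<alpha> * fst p + \<beta> * snd p + \<gamma> = r}, {p. \<alpha> * fst p + \<beta> * snd p + \<gamma> = -r}}"
    by (rule Vaff_two[OF _ assms(2)]) (auto intro!: continuous_intros simp only: e1 e2 flat_affine flat_ne)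
  then show ?thesis by (simp add: e1 e2 out_set_Cons out_set_Nil)
qed

lemma Vaff_two_lines_y:
  fixes \<alpha> \<beta> \<gamma> r :: real
  assumes "\<beta> \<noteq> 0" "r > 0"
  shows "Vaff ({p. \<alpha> * fst p + \<beta> * snd p + \<gamma> = r} \<union> {p. \<alpha> * fst p + \<beta> * snd p + \<gamma> = -r})
     = out_set [((0, (r - \<gamma>)/\<beta>), [(1, -\<alpha>/\<beta>)]), ((0, (- \<gamma> - r)/\<beta>), [(1, -\<alpha>/\<beta>)])]"
proof -
  have e1: "{p. \<alpha> * fst p + \<beta> * snd p + \<gamma> = r} = flat (0, (r - \<gamma>)/\<beta>) [(1, -\<alpha>/\<beta>)]"
    using line_y[OF assms(1), of \<alpha> "\<gamma> - r"] by (simp add: algebra_simps)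
  have e2: "{p. \<alpha> * fst p + \<beta> * snd p + \<gamma> = -r} = flat (0, (- \<gamma> - r)/\<beta>) [(1, -\<alpha>/\<beta>)]"
  proof -
    have "{p. \<alpha> * fst p + \<beta> * snd p + \<gamma> = -r} = {p. \<alpha> * fst p + \<beta> * snd p + (\<gamma> + r) = 0}"
      by (rule Collect_cong) linarith
    also have "\<dots> = flat (0, (- \<gamma> - r)/\<beta>) [(1, -\<alpha>/\<beta>)]"
      using line_y[OF assms(1), of \<alpha> "\<gamma> + r"] by (simp add: algebra_simps)
    finally show ?thesis .
  qed
  have "Vaff ({p. \<alpha> * fst p + \<beta> * snd p + \<gamma> = r} \<union> {p. \<alpha> * fst p + \<beta> * snd p + \<gamma> = -r})
     = {{p. \<alpha> * fst p + \<beta> * snd p + \<gamma> = r}, {p. \<alpha> * fst p + \<beta> * snd p + \<gamma> = -r}}"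
    by (rule Vaff_two[OF _ assms(2)]) (auto intro!: continuous_intros simp only: e1 e2 flat_affine flat_ne)
  then show ?thesis by (simp add: e1 e2 out_set_Cons out_set_Nil)
qed



lemma Vaff_flat: "Vaff (flat p ds) = out_set [(p, ds)]"
  by (simp add: Vaff_affine flat_affine flat_ne out_set_Cons out_set_Nil)

context
  fixes a b0 b1 c0 c1 c2 :: real
  assumes a: "a \<noteq> 0"
begin

lemma Z1: "Z a b0 b1 c0 c1 c2 = {p. (2*a*fst p + b1 * snd p + b0)^2 =
   (b1*b1 - 4*a*c2)*(snd p)^2 + (2*b0*b1 - 4*a*c1) * snd p + (b0*b0 - 4*a*c0)}"
proof -
  have "4*a*(a * x^2 + (b0 + b1 * y) * x + (c0 + c1 * y + c2 * y^2)) =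
     (2*a*x + b1 * y + b0)^2 - ((b1*b1 - 4*a*c2)*y^2 + (2*b0*b1 - 4*a*c1) * y + (b0*b0 - 4*a*c0))" for x y
    by (simp add: power2_eq_square algebra_simps)
  note id = this
  have "(a * x^2 + (b0 + b1 * y) * x + (c0 + c1 * y + c2 * y^2) = 0) \<longleftrightarrow>
     (2*a*x + b1 * y + b0)^2 = (b1*b1 - 4*a*c2)*y^2 + (2*b0*b1 - 4*a*c1) * y + (b0*b0 - 4*a*c0)" for x y
  proof -
    have "(a * x^2 + (b0 + b1 * y) * x + (c0 + c1 * y + c2 * y^2) = 0) \<longleftrightarrow>
       4*a*(a * x^2 + (b0 + b1 * y) * x + (c0 + c1 * y + c2 * y^2)) = 0" using a by simp
    then show ?thesis unfolding id by simp
  qed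
  then show ?thesis unfolding Z_def by (auto simp del: power2_eq_square)
qed

lemma case1_line:
  assumes "b1*b1 - 4*a*c2 = 0" "2*b0*b1 - 4*a*c1 = 0" "b0*b0 - 4*a*c0 = 0"
  shows "Vaff (Z a b0 b1 c0 c1 c2) = out_set [((-b0/(2*a), 0), [(-b1/(2*a), 1)])]"
proof -
  have "Z a b0 b1 c0 c1 c2 = {p. (2*a) * fst p + b1 * snd p + b0 = 0}"
    unfolding Z1 assms by simp
  also have "\<dots> = flat (-b0/(2*a), 0) [(-b1/(2*a), 1)]"
    using line_x[of "2*a" b1 b0] a by simp
  finally show ?thesis by (simp add: Vaff_flat)
qed

lemma case1_two:
  assumes "b1*b1 - 4*a*c2 = 0" "2*b0*b1 - 4*a*c1 = 0" "b0*b0 - 4*a*c0 > 0"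
  shows "Vaff (Z a b0 b1 c0 c1 c2) = out_set [(((sqrt (b0*b0 - 4*a*c0) - b0)/(2*a), 0), [(-b1/(2*a), 1)]),
      (((- b0 - sqrt (b0*b0 - 4*a*c0))/(2*a), 0), [(-b1/(2*a), 1)])]"
proof -
  let ?r = "sqrt (b0*b0 - 4*a*c0)"
  have r: "?r > 0" using assms(3) by simp
  have sq: "?r^2 = b0*b0 - 4*a*c0" using assms(3) by simp
  have iff: "t^2 = b0*b0 - 4*a*c0 \<longleftrightarrow> t = ?r \<or> t = - ?r" for t
  proof -
    have "t^2 = b0*b0 - 4*a*c0 \<longleftrightarrow> t^2 = ?r^2" by (simp only: sq)
    then show ?thesis by (simp only: power2_eq_iff)
  qed
  have "Z a b0 b1 c0 c1 c2 = {p. (2*a*fst p + b1 * snd p + b0)^2 = b0*b0 - 4*a*c0}"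
    unfolding Z1 assms(1,2) by simp
  also have "\<dots> = {p. 2*a * fst p + b1 * snd p + b0 = ?r} \<union> {p. 2*a * fst p + b1 * snd p + b0 = - ?r}"
    unfolding iff by blast
  finally have Zeq: "Z a b0 b1 c0 c1 c2 = {p. 2*a * fst p + b1 * snd p + b0 = ?r} \<union> {p. 2*a * fst p + b1 * snd p + b0 = - ?r}" .
  show ?thesis unfolding Zeq by (rule Vaff_two_lines) (use a r in auto)
qed

lemma case1_pt:
  assumes "b1*b1 - 4*a*c2 < 0" "(2*b0*b1 - 4*a*c1)^2 = 4*(b1*b1 - 4*a*c2)*(b0*b0 - 4*a*c0)"
  shows "Vaff (Z a b0 b1 c0 c1 c2) = out_set [(((-b0 - b1 * (-(2*b0*b1 - 4*a*c1)/(2*(b1*b1 - 4*a*c2))))/(2*a),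
        -(2*b0*b1 - 4*a*c1)/(2*(b1*b1 - 4*a*c2))), [])]"
proof -
  define d2 where "d2 = b1*b1 - 4*a*c2"
  define d1 where "d1 = 2*b0*b1 - 4*a*c1"
  define d0 where "d0 = b0*b0 - 4*a*c0"
  define y0 where "y0 = -d1/(2*d2)"
  define x0 where "x0 = (-b0 - b1*y0)/(2*a)"
  have d2: "d2 < 0" using assms(1) d2_def by simp
  have dd: "d1^2 = 4*d2*d0" using assms(2) unfolding d2_def d1_def d0_def by simp
  have D: "d2*y^2 + d1*y + d0 = d2*(y - y0)^2" for y
  proof -
    have "d0 = d1^2/(4*d2)" using dd d2 by (simp add: field_simps)
    then show ?thesis unfolding y0_def using d2 by (simp add: field_simps power2_eq_square)
  qed
  have "Z a b0 b1 c0 c1 c2 = {(x0, y0)}"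
  proof (intro set_eqI iffI)
    fix p assume "p \<in> Z a b0 b1 c0 c1 c2"
    then have "(2*a*fst p + b1 * snd p + b0)^2 = d2*(snd p)^2 + d1 * snd p + d0"
      unfolding Z1 d2_def d1_def d0_def by simp
    then have e: "(2*a*fst p + b1 * snd p + b0)^2 = d2*(snd p - y0)^2" unfolding D .
    have "d2*(snd p - y0)^2 \<le> 0" using d2 by (simp add: mult_nonpos_nonneg)
    with e have "(2*a*fst p + b1 * snd p + b0)^2 = 0" "d2*(snd p - y0)^2 = 0"
      by (metis antisym zero_le_power2)+
    then have "2*a*fst p + b1 * snd p + b0 = 0" "snd p = y0" using d2 by auto
    then have "fst p = x0" unfolding x0_def using a by (simp add: field_simps)
    with \<open>snd p = y0\<close> show "p \<in> {(x0, y0)}" by (cases p) simp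
  next
    fix p assume "p \<in> {(x0, y0)}"
    then have p: "p = (x0, y0)" by simp
    have "2*a*x0 + b1*y0 + b0 = 0" unfolding x0_def using a by (simp add: field_simps)
    then have "(2*a*x0 + b1*y0 + b0)^2 = d2*y0^2 + d1*y0 + d0" using D[of y0] by simp
    then show "p \<in> Z a b0 b1 c0 c1 c2"
      unfolding Z1 p unfolding d2_def d1_def d0_def by simp
  qed
  then show ?thesis
    using Vaff_flat[of "(x0, y0)" "[]"] flat_point[of "(x0,y0)"]
    unfolding x0_def y0_def d2_def d1_def by simp
qed

lemma case1_empty:
  assumes "\<not> (b1*b1 - 4*a*c2 = 0 \<and> 2*b0*b1 - 4*a*c1 = 0 \<and> b0*b0 - 4*a*c0 \<ge> 0)"
    "\<not> (b1*b1 - 4*a*c2 < 0 \<and> (2*b0*b1 - 4*a*c1)^2 = 4*(b1*b1 - 4*a*c2)*(b0*b0 - 4*a*c0))"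
  shows "Vaff (Z a b0 b1 c0 c1 c2) = {}"
proof -
  have "Z a b0 b1 c0 c1 c2 = (\<lambda>p. ((2*a)*fst p + b1 * snd p + b0, 0*fst p + 1 * snd p + 0)) -`
     W (b1*b1 - 4*a*c2) (2*b0*b1 - 4*a*c1) (b0*b0 - 4*a*c0)"
    unfolding Z1 W_def by (simp add: vimage_def)
  also have "Vaff \<dots> = {}"
    by (rule Vaff_lin_preimage[OF W_empty[OF assms]]) (use a in simp)
  finally show ?thesis .
qed

end



context
  fixes b0 b1 c0 c1 c2 :: real
  assumes c: "c2 \<noteq> 0"
begin

lemma Z2: "Z 0 b0 b1 c0 c1 c2 = {p. (b1*fst p + 2*c2 * snd p + c1)^2 =
   (b1*b1)*(fst p)^2 + (2*b1*c1 - 4*c2*b0) * fst p + (c1*c1 - 4*c2*c0)}"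
proof -
  have id: "4*c2*(0 * x^2 + (b0 + b1 * y) * x + (c0 + c1 * y + c2 * y^2)) =
     (b1*x + 2*c2 * y + c1)^2 - ((b1*b1)*x^2 + (2*b1*c1 - 4*c2*b0) * x + (c1*c1 - 4*c2*c0))" for x y
    by (simp add: power2_eq_square algebra_simps)
  have "(0 * x^2 + (b0 + b1 * y) * x + (c0 + c1 * y + c2 * y^2) = 0) \<longleftrightarrow>
     (b1*x + 2*c2 * y + c1)^2 = (b1*b1)*x^2 + (2*b1*c1 - 4*c2*b0) * x + (c1*c1 - 4*c2*c0)" for x y
  proof -
    have "(0 * x^2 + (b0 + b1 * y) * x + (c0 + c1 * y + c2 * y^2) = 0) \<longleftrightarrow>
       4*c2*(0 * x^2 + (b0 + b1 * y) * x + (c0 + c1 * y + c2 * y^2)) = 0" using c by simp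
    then show ?thesis unfolding id by simp
  qed
  then show ?thesis unfolding Z_def by (auto simp del: power2_eq_square mult_zero_left)
qed

lemma case2_line:
  assumes "b1*b1 = 0" "2*b1*c1 - 4*c2*b0 = 0" "c1*c1 - 4*c2*c0 = 0"
  shows "Vaff (Z 0 b0 b1 c0 c1 c2) = out_set [((0, -c1/(2*c2)), [(1, -b1/(2*c2))])]"
proof -
  have "Z 0 b0 b1 c0 c1 c2 = {p. b1 * fst p + (2*c2) * snd p + c1 = 0}"
    unfolding Z2 assms by simp
  also have "\<dots> = flat (0, -c1/(2*c2)) [(1, -b1/(2*c2))]"
    using line_y[of "2*c2" b1 c1] c by simp
  finally show ?thesis by (simp add: Vaff_flat)
qed

lemma case2_two:
  assumes "b1*b1 = 0" "2*b1*c1 - 4*c2*b0 = 0" "c1*c1 - 4*c2*c0 > 0"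
  shows "Vaff (Z 0 b0 b1 c0 c1 c2) = out_set [((0, (sqrt (c1*c1 - 4*c2*c0) - c1)/(2*c2)), [(1, -b1/(2*c2))]),
      ((0, (- c1 - sqrt (c1*c1 - 4*c2*c0))/(2*c2)), [(1, -b1/(2*c2))])]"
proof -
  let ?r = "sqrt (c1*c1 - 4*c2*c0)"
  have r: "?r > 0" using assms(3) by simp
  have sq: "?r^2 = c1*c1 - 4*c2*c0" using assms(3) by simp
  have iff: "t^2 = c1*c1 - 4*c2*c0 \<longleftrightarrow> t = ?r \<or> t = - ?r" for t
  proof -
    have "t^2 = c1*c1 - 4*c2*c0 \<longleftrightarrow> t^2 = ?r^2" by (simp only: sq)
    then show ?thesis by (simp only: power2_eq_iff)
  qed
  have "Z 0 b0 b1 c0 c1 c2 = {p. (b1*fst p + 2*c2 * snd p + c1)^2 = c1*c1 - 4*c2*c0}"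
    unfolding Z2 assms(1,2) by simp
  also have "\<dots> = {p. b1 * fst p + 2*c2 * snd p + c1 = ?r} \<union> {p. b1 * fst p + 2*c2 * snd p + c1 = - ?r}"
    unfolding iff by blast
  finally have Zeq: "Z 0 b0 b1 c0 c1 c2 = {p. b1 * fst p + 2*c2 * snd p + c1 = ?r} \<union> {p. b1 * fst p + 2*c2 * snd p + c1 = - ?r}" .
  show ?thesis unfolding Zeq by (rule Vaff_two_lines_y) (use c r in auto)
qed

lemma case2_empty:
  assumes "\<not> (b1*b1 = 0 \<and> 2*b1*c1 - 4*c2*b0 = 0 \<and> c1*c1 - 4*c2*c0 \<ge> 0)"
  shows "Vaff (Z 0 b0 b1 c0 c1 c2) = {}"
proof -
  have n2: "\<not> (b1*b1 < 0 \<and> (2*b1*c1 - 4*c2*b0)^2 = 4*(b1*b1)*(c1*c1 - 4*c2*c0))"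
    by (simp add: not_less)
  have "Z 0 b0 b1 c0 c1 c2 = (\<lambda>p. (b1*fst p + (2*c2) * snd p + c1, 1*fst p + 0 * snd p + 0)) -`
     W (b1*b1) (2*b1*c1 - 4*c2*b0) (c1*c1 - 4*c2*c0)"
    unfolding Z2 W_def by (simp add: vimage_def)
  also have "Vaff \<dots> = {}"
    by (rule Vaff_lin_preimage[OF W_empty[OF assms n2]]) (use c in simp)
  finally show ?thesis .
qed

end

lemma case3_empty:
  fixes b0 b1 c0 c1 :: real
  assumes b: "b1 \<noteq> 0"
  shows "Vaff (Z 0 b0 b1 c0 c1 0) = {}"
proof -
  let ?k = "b1*c0 - b0*c1"
  have id: "4*b1*(0 * x^2 + (b0 + b1 * y) * x + (c0 + c1 * y + 0 * y^2)) =
     (b1*x + b1*y + (c1 + b0))^2 - (b1*x + (-b1)*y + (c1 - b0))^2 + 4*?k" for x y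
    by (simp add: power2_eq_square algebra_simps)
  have iff: "(0 * x^2 + (b0 + b1 * y) * x + (c0 + c1 * y + 0 * y^2) = 0) \<longleftrightarrow>
     (b1*x + (-b1)*y + (c1 - b0))^2 = 1*(b1*x + b1*y + (c1 + b0))^2 + 0*(b1*x + b1*y + (c1 + b0)) + 4*?k" for x y
  proof -
    have "(0 * x^2 + (b0 + b1 * y) * x + (c0 + c1 * y + 0 * y^2) = 0) \<longleftrightarrow>
       4*b1*(0 * x^2 + (b0 + b1 * y) * x + (c0 + c1 * y + 0 * y^2)) = 0" using b by simp
    then show ?thesis unfolding id by auto
  qed
  have "Z 0 b0 b1 c0 c1 0 = (\<lambda>p. (b1*fst p + (-b1) * snd p + (c1 - b0), b1*fst p + b1 * snd p + (c1 + b0))) -`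
     W 1 0 (4*?k)"
    unfolding W_def vimage_def Z_def
    using iff by (simp del: mult_zero_left mult_1 power2_eq_square)
  also have "Vaff \<dots> = {}"
    by (rule Vaff_lin_preimage[OF W_empty]) (use b in auto)
  finally show ?thesis .
qed

lemma Z4: "Z 0 b0 0 c0 c1 0 = {p. b0 * fst p + c1 * snd p + c0 = 0}"
  unfolding Z_def by (simp add: algebra_simps)

lemma case4a: "b0 \<noteq> 0 \<Longrightarrow> Vaff (Z 0 b0 0 c0 c1 0) = out_set [((-c0/b0, 0), [(-c1/b0, 1)])]"
  unfolding Z4 using line_x[of b0 c1 c0] by (simp add: Vaff_flat)

lemma case4b: "c1 \<noteq> 0 \<Longrightarrow> Vaff (Z 0 0 0 c0 c1 0) = out_set [((0, -c0/c1), [(1, 0)])]"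
  unfolding Z4 using line_y[of c1 0 c0] by (simp add: Vaff_flat)

lemma case4c: "Vaff (Z 0 0 0 0 0 0) = out_set [((0,0), [(1,0),(0,1)])]"
proof -
  have "Z 0 0 0 0 0 0 = UNIV" unfolding Z4 by simp
  then show ?thesis using Vaff_flat[of "(0,0)" "[(1,0),(0,1)]"] flat_univ by simp
qed

lemma case4d: "c0 \<noteq> 0 \<Longrightarrow> Vaff (Z 0 0 0 c0 0 0) = out_set []"
proof -
  assume "c0 \<noteq> 0"
  then have "Z 0 0 0 c0 0 0 = {}" unfolding Z4 by simp
  then show ?thesis by (simp add: Vaff_empty out_set_Nil)
qed



lemma Poly_sq_ne: "Poly [m, 0, 1::real] \<noteq> 0"
  by (metis Poly.simps(2) pCons_eq_0_iff zero_neq_one)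

lemma roots_sq:
  fixes m :: real
  assumes "m < 0"
  shows "real_roots_sorted (Poly [m, 0, 1]) = [- sqrt (-m), sqrt (-m)]"
proof -
  have "{x. poly (Poly [m, 0, 1]) x = 0} = {x. x^2 = (sqrt (-m))^2}"
    using assms by (simp add: power2_eq_square, intro Collect_cong, linarith)
  also have "\<dots> = set [- sqrt (-m), sqrt (-m)]"
    by (auto simp: power2_eq_iff)
  finally have "real_roots_sorted (Poly [m, 0, 1]) = sorted_list_of_set (set [- sqrt (-m), sqrt (-m)])"
    unfolding real_roots_sorted_def by simp
  also have "\<dots> = [- sqrt (-m), sqrt (-m)]"
    by (rule sorted_list_of_set.idem_if_sorted_distinct) (use assms in auto)
  finally show ?thesis .
qed

lemma roots_sq':
  fixes m :: real
  assumes "m < 0"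
  shows "real_roots_sorted [:m, 0, 1:] = [- sqrt (-m), sqrt (-m)]"
  using roots_sq[OF assms] by simp

definition PT1 :: prog where
  "PT1 = Add 11 11 (Inv 35 (Neg 16 (Mul 37 36 (Mul 26 38 (Add 24 39 (Ret [((40,38),[])]))))))"

definition O1 :: prog where
  "O1 = Mul 16 16 (Mul 6 11 (Mul 30 20 (Neg 31 (Add 29 32 (Neg 11
     (IfPos 34 (IfZero 33 PT1 (Ret [])) (Ret [])))))))"

definition TWO1 :: prog where
  "TWO1 = Neg 20 (Roots [29,27,28] (Mul 32 22 (Add 33 24 (Mul 31 22 (Add 35 24
     (Ret [((34,27),[(26,28)]),((36,27),[(26,28)])]))))))"

definition L1 :: prog where
  "L1 = IfZero 20 (Ret [((24,27),[(26,28)])]) (IfPos 20 TWO1 (Ret []))"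

definition PA :: prog where
  "PA = Const 4 (Mul 6 0 (Mul 2 2 (Mul 7 5 (Neg 9 (Add 8 10 (Mul 1 2 (Add 12 12 (Mul 7 4 (Neg 14
     (Add 13 15 (Mul 1 1 (Mul 7 3 (Neg 18 (Add 17 19 (Add 0 0 (Inv 21 (Neg 1 (Mul 23 22 (Neg 2
     (Mul 25 22 (Const 0 (Const 1 (IfZero 11 (IfZero 16 L1 O1) O1)))))))))))))))))))))))"

definition TWO2 :: prog where
  "TWO2 = Neg 17 (Roots [26,24,25] (Mul 29 19 (Add 30 21 (Mul 28 19 (Add 32 21
     (Ret [((24,31),[(25,23)]),((24,33),[(25,23)])]))))))"

definition L2 :: prog where
  "L2 = IfZero 17 (Ret [((24,21),[(25,23)])]) (IfPos 17 TWO2 (Ret []))"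

definition PC2 :: prog where
  "PC2 = Const 4 (Mul 6 5 (Mul 2 2 (Mul 2 4 (Add 9 9 (Mul 7 1 (Neg 11 (Add 10 12 (Mul 4 4 (Mul 7 3
     (Neg 15 (Add 14 16 (Add 5 5 (Inv 18 (Neg 4 (Mul 20 19 (Neg 2 (Mul 22 19 (Const 0 (Const 1
     (IfZero 8 (IfZero 13 L2 (Ret [])) (Ret [])))))))))))))))))))))"

definition LA :: prog where
  "LA = Inv 1 (Neg 3 (Mul 7 6 (Neg 4 (Mul 9 6 (Const 0 (Const 1 (Ret [((8,11),[(10,12)])])))))))"

definition LB :: prog where
  "LB = Inv 4 (Neg 3 (Mul 7 6 (Const 0 (Const 1 (Ret [((9,8),[(10,9)])])))))"

definition UP :: prog where
  "UP = Const 0 (Const 1 (Ret [((6,6),[(7,6),(6,7)])]))"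

definition PC20 :: prog where
  "PC20 = IfZero 2 (IfZero 1 (IfZero 4 (IfZero 3 UP (Ret [])) LB) LA) (Ret [])"

definition PMAIN :: prog where
  "PMAIN = IfZero 0 (IfZero 5 PC20 PC2) PA"

lemmas prog_defs = PT1_def O1_def TWO1_def L1_def PA_def TWO2_def L2_def PC2_def LA_def LB_def UP_def PC20_def PMAIN_def

lemma case_A:
  fixes a b0 b1 c0 c1 c2 :: real
  assumes a: "a \<noteq> 0"
  shows "\<exists>out. exec PMAIN [a,b0,b1,c0,c1,c2] = Some out \<and> out_set out = Vaff (Z a b0 b1 c0 c1 c2)"
proof -
  define D2 where "D2 = b1*b1 + -((4*a)*c2)"
  define D1 where "D1 = b0*b1 + b0*b1 + -((4*a)*c1)"
  define D0 where "D0 = b0*b0 + -((4*a)*c0)"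
  have D2e: "D2 = b1*b1 - 4*a*c2" and D1e: "D1 = 2*b0*b1 - 4*a*c1" and D0e: "D0 = b0*b0 - 4*a*c0"
    unfolding D2_def D1_def D0_def by simp_all
  have a2: "a + a \<noteq> 0" using a by simp
  show ?thesis
  proof (cases "D2 = 0 \<and> D1 = 0")
    case True
    then have t1: "D2 = 0" and t2: "D1 = 0" by auto
    consider "D0 = 0" | "D0 > 0" | "D0 < 0" by linarith
    then show ?thesis
    proof cases
      case 1
      have V: "Vaff (Z a b0 b1 c0 c1 c2) = out_set [((-b0/(2*a), 0), [(-b1/(2*a), 1)])]"
        by (rule case1_line[OF a]) (use t1 t2 1 D2e D1e D0e in auto)
      show ?thesis using a a2 t1 t2 1
        unfolding D2_def D1_def D0_def
        apply (simp add: prog_defs reg_def nth_append)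
        apply (subst V)
        apply (rule arg_cong[where f = out_set])
        apply (simp add: field_simps)
        done
    next
      case 2
      have V: "Vaff (Z a b0 b1 c0 c1 c2) = out_set [(((sqrt (b0*b0 - 4*a*c0) - b0)/(2*a), 0), [(-b1/(2*a), 1)]),
      (((- b0 - sqrt (b0*b0 - 4*a*c0))/(2*a), 0), [(-b1/(2*a), 1)])]"
        by (rule case1_two[OF a]) (use t1 t2 2 D2e D1e D0e in auto)
      have m: "- D0 < 0" using 2 by simp
      show ?thesis using a a2 t1 t2 2 m
        unfolding D2_def D1_def D0_def
        apply (simp add: prog_defs reg_def nth_append roots_sq' Let_def)
        apply (subst V)
        apply (rule arg_cong[where f = out_set])
        apply (simp add: field_simps)
        done
    next
      case 3
      have V: "Vaff (Z a b0 b1 c0 c1 c2) = {}"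
        by (rule case1_empty[OF a]) (use t1 t2 3 D2e D1e D0e in auto)
      show ?thesis using a a2 t1 t2 3
        unfolding D2_def D1_def D0_def
        by (simp add: prog_defs reg_def nth_append V out_set_Nil)
    qed
  next
    case nl: False
    show ?thesis
    proof (cases "- D2 > 0 \<and> D1*D1 + -((4*D2)*D0) = 0")
      case True
      then have t1: "- D2 > 0" and t2: "D1*D1 + -((4*D2)*D0) = 0" by auto
      have V: "Vaff (Z a b0 b1 c0 c1 c2) = out_set [(((-b0 - b1 * (-(2*b0*b1 - 4*a*c1)/(2*(b1*b1 - 4*a*c2))))/(2*a),
        -(2*b0*b1 - 4*a*c1)/(2*(b1*b1 - 4*a*c2))), [])]"
        by (rule case1_pt[OF a]) (use t1 t2 D2e D1e D0e in \<open>auto simp: power2_eq_square\<close>)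
      have d2: "D2 + D2 \<noteq> 0" using t1 by simp
      show ?thesis using a a2 nl t1 t2 d2
        unfolding D2_def D1_def D0_def
        apply (simp add: prog_defs reg_def nth_append)
        apply (subst V)
        apply (rule arg_cong[where f = out_set])
        apply (simp add: field_simps)
        done
    next
      case np: False
      have V: "Vaff (Z a b0 b1 c0 c1 c2) = {}"
        by (rule case1_empty[OF a]) (use nl np D2e D1e D0e in \<open>auto simp: power2_eq_square\<close>)
      show ?thesis using a a2 nl np
        unfolding D2_def D1_def D0_def
        by (simp add: prog_defs reg_def nth_append V out_set_Nil)
    qed
  qed
qed

lemma case_B:
  fixes b0 b1 c0 c1 c2 :: real
  assumes c: "c2 \<noteq> 0"
  shows "\<exists>out. exec PMAIN [0,b0,b1,c0,c1,c2] = Some out \<and> out_set out = Vaff (Z 0 b0 b1 c0 c1 c2)"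
proof -
  define E2 where "E2 = b1*b1"
  define E1 where "E1 = b1*c1 + b1*c1 + -((4*c2)*b0)"
  define E0 where "E0 = c1*c1 + -((4*c2)*c0)"
  have E1e: "E1 = 2*b1*c1 - 4*c2*b0" and E0e: "E0 = c1*c1 - 4*c2*c0"
    unfolding E1_def E0_def by simp_all
  have c2: "c2 + c2 \<noteq> 0" using c by simp
  show ?thesis
  proof (cases "E2 = 0 \<and> E1 = 0")
    case True
    then have t1: "E2 = 0" and t2: "E1 = 0" by auto
    have hb1: "b1 = 0" using t1 unfolding E2_def by simp
    have hb0: "b0 = 0" using t2 c unfolding E1_def hb1 by simp
    consider "E0 = 0" | "E0 > 0" | "E0 < 0" by linarith
    then show ?thesis
    proof cases
      case 1
      have V: "Vaff (Z 0 b0 b1 c0 c1 c2) = out_set [((0, -c1/(2*c2)), [(1, -b1/(2*c2))])]"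
        by (rule case2_line[OF c]) (use t1 t2 1 E2_def E1e E0e in auto)
      show ?thesis using c c2 t1 t2 1
        unfolding E2_def E1_def E0_def
        apply (simp add: prog_defs reg_def nth_append)
        apply (subst V[unfolded hb0 hb1])
        apply (rule arg_cong[where f = out_set])
        apply (simp add: field_simps)
        done
    next
      case 2
      have V: "Vaff (Z 0 b0 b1 c0 c1 c2) = out_set [((0, (sqrt (c1*c1 - 4*c2*c0) - c1)/(2*c2)), [(1, -b1/(2*c2))]),
      ((0, (- c1 - sqrt (c1*c1 - 4*c2*c0))/(2*c2)), [(1, -b1/(2*c2))])]"
        by (rule case2_two[OF c]) (use t1 t2 2 E2_def E1e E0e in auto)
      have m: "- E0 < 0" using 2 by simp
      show ?thesis using c c2 t1 t2 2 m
        unfolding E2_def E1_def E0_def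
        apply (simp add: prog_defs reg_def nth_append roots_sq' Let_def)
        apply (subst V[unfolded hb0 hb1])
        apply (rule arg_cong[where f = out_set])
        apply (simp add: field_simps)
        done
    next
      case 3
      have V: "Vaff (Z 0 b0 b1 c0 c1 c2) = {}"
        by (rule case2_empty[OF c]) (use t1 t2 3 E2_def E1e E0e in auto)
      show ?thesis using c c2 t1 t2 3
        unfolding E2_def E1_def E0_def
        by (simp add: prog_defs reg_def nth_append V[unfolded hb0 hb1] out_set_Nil)
    qed
  next
    case nl: False
    have V: "Vaff (Z 0 b0 b1 c0 c1 c2) = {}"
      by (rule case2_empty[OF c]) (use nl E2_def E1e E0e in auto)
    show ?thesis using c c2 nl
      unfolding E2_def E1_def E0_def
      by (simp add: prog_defs reg_def nth_append V out_set_Nil)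
  qed
qed

lemma case_C:
  fixes b0 b1 c0 c1 :: real
  shows "\<exists>out. exec PMAIN [0,b0,b1,c0,c1,0] = Some out \<and> out_set out = Vaff (Z 0 b0 b1 c0 c1 0)"
proof (cases "b1 = 0")
  case False
  then show ?thesis
    by (simp add: prog_defs reg_def nth_append case3_empty out_set_Nil)
next
  case True
  show ?thesis
  proof (cases "b0 = 0")
    case False
    have V: "Vaff (Z 0 b0 0 c0 c1 0) = out_set [((-c0/b0, 0), [(-c1/b0, 1)])]"
      by (rule case4a[OF False])
    show ?thesis using True False
      apply (simp add: prog_defs reg_def nth_append)
      apply (subst V)
      apply (rule arg_cong[where f = out_set])
      apply (simp add: field_simps)
      done
  next
    case b0: True
    show ?thesis
    proof (cases "c1 = 0")
      case False
      have V: "Vaff (Z 0 0 0 c0 c1 0) = out_set [((0, -c0/c1), [(1, 0)])]"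
        by (rule case4b[OF False])
      show ?thesis using True b0 False
        apply (simp add: prog_defs reg_def nth_append)
        apply (subst V)
        apply (rule arg_cong[where f = out_set])
        apply (simp add: field_simps)
        done
    next
      case c1: True
      show ?thesis
      proof (cases "c0 = 0")
        case True
        then show ?thesis using \<open>b1 = 0\<close> b0 c1 case4c
          by (simp add: prog_defs reg_def nth_append)
      next
        case False
        then show ?thesis using \<open>b1 = 0\<close> b0 c1 case4d[OF False]
          by (simp add: prog_defs reg_def nth_append)
      qed
    qed
  qed
qed

lemma main_exec:
  fixes a b0 b1 c0 c1 c2 :: real
  shows "\<exists>out. exec PMAIN [a,b0,b1,c0,c1,c2] = Some out \<and> out_set out = Vaff (Z a b0 b1 c0 c1 c2)"
proof (cases "a = 0")
  case False
  then show ?thesis by (rule case_A)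
next
  case a: True
  show ?thesis
  proof (cases "c2 = 0")
    case True
    then show ?thesis using a case_C by simp
  next
    case False
    then show ?thesis using a case_B by simp
  qed
qed

lemma poly2:
  fixes p :: "real poly"
  assumes "degree p \<le> 2"
  shows "poly p y = coeff p 0 + coeff p 1 * y + coeff p 2 * y^2"
proof -
  have "poly p y = (\<Sum>i\<le>degree p. coeff p i * y ^ i)" by (rule poly_altdef)
  also have "\<dots> = (\<Sum>i\<le>2. coeff p i * y ^ i)"
    by (rule sum.mono_neutral_left) (use assms in \<open>auto simp: coeff_eq_0\<close>)
  also have "\<dots> = coeff p 0 + coeff p 1 * y + coeff p 2 * y^2"
    by (simp add: numeral_2_eq_2)
  finally show ?thesis .
qed

theorem lemma4p9:
  shows "\<exists>P :: prog. \<forall>f0 f1 f2 :: real poly.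
           degree f0 \<le> 0 \<longrightarrow> degree f1 \<le> 1 \<longrightarrow> degree f2 \<le> 2 \<longrightarrow>
           (\<exists>out. exec P (input_regs f0 f1 f2) = Some out \<and>
                  out_set out = Vaff (zero_set f0 f1 f2))"
proof (intro exI[of _ PMAIN] allI impI)
  fix f0 f1 f2 :: "real poly"
  assume d0: "degree f0 \<le> 0" and d1: "degree f1 \<le> 1" and d2: "degree f2 \<le> 2"
  have p0: "poly f0 y = coeff f0 0" for y
    using poly2[of f0 y] d0 by (simp add: coeff_eq_0)
  have p1: "poly f1 y = coeff f1 0 + coeff f1 1 * y" for y
    using poly2[of f1 y] d1 by (simp add: coeff_eq_0)
  have p2: "poly f2 y = coeff f2 0 + coeff f2 1 * y + coeff f2 2 * y^2" for y
    using poly2[of f2 y] d2 by simp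
  have "zero_set f0 f1 f2 = Z (coeff f0 0) (coeff f1 0) (coeff f1 1) (coeff f2 0) (coeff f2 1) (coeff f2 2)"
    unfolding zero_set_def Z_def quad_eval_def by (simp add: case_prod_beta p0 p1 p2)
  then show "\<exists>out. exec PMAIN (input_regs f0 f1 f2) = Some out \<and> out_set out = Vaff (zero_set f0 f1 f2)"
    using main_exec unfolding input_regs_def by simp
qed


end
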